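(* Let $G$ be a totally disconnected, locally compact group and $\mathcal{H}$ a group of automorphisms of $G$. Then the set $\mathcal{H}_{FC_d}:=\{\varphi\in\mathcal{H}:\varphi^{\mathcal{H}}\text{ is bounded}\}$ is a normal subgroup of $\mathcal{H}$, and for any such $\mathcal{H}$ we have $(\mathcal{H}_{FC_d})_{FC_d}=\mathcal{H}_{FC_d}$.
   Context: Automorphisms are continuous with continuous inverse. $\mathcal{B}(G)$ is the set of compact, open subgroups of $G$ with metric $d(V,W)=\log\bigl(|V:V\cap W|\cdot|W:W\cap V|\bigr)$. A set $B$ of automorphisms of $G$ is bounded if $B.V=\{\beta(V):\beta\in B\}$ has bounded diameter in $\mathcal{B}(G)$ for some (equivalently every) $V\in\mathcal{B}(G)$. For a group $\mathcal{K}$ of automorphisms and $\varphi\in\mathcal{K}$, $\varphi^{\mathcal{K}}=\{\psi\varphi\psi^{-1}:\psi\in\mathcal{K}\}$, and $\mathcal{K}_{FC_d}=\{\varphi\in\mathcal{K}:\varphi^{\mathcal{K}}\text{ bounded}\}$; in particular $(\mathcal{H}_{FC_d})_{FC_d}$ uses conjugation by elements of $\mathcal{H}_{FC_d}$ only. *)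

theory Defs
  imports "HOL-Analysis.Analysis" "HOL-Algebra.Algebra"
begin

definition topological_group :: "'a monoid \<Rightarrow> 'a topology \<Rightarrow> bool" where
  "topological_group G T \<longleftrightarrow> group G \<and> topspace T = carrier G \<and>
     continuous_map (prod_topology T T) T (\<lambda>p. fst p \<otimes>\<^bsub>G\<^esub> snd p) \<and>
     continuous_map T T (\<lambda>x. inv\<^bsub>G\<^esub> x)"

definition totally_disconnected_space :: "'a topology \<Rightarrow> bool" where
  "totally_disconnected_space T \<longleftrightarrow>
     (\<forall>S. connectedin T S \<longrightarrow> (\<forall>x\<in>S. \<forall>y\<in>S. x = y))"

definition top_auto :: "'a monoid \<Rightarrow> 'a topology \<Rightarrow> ('a \<Rightarrow> 'a) set" where
  "top_auto G T = {\<phi> \<in> auto G. homeomorphic_map T T \<phi>}"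

definition CO_subgroups :: "'a monoid \<Rightarrow> 'a topology \<Rightarrow> 'a set set" where
  "CO_subgroups G T = {V. subgroup V G \<and> compactin T V \<and> openin T V}"

definition sg_index :: "'a monoid \<Rightarrow> 'a set \<Rightarrow> 'a set \<Rightarrow> nat" where
  "sg_index G V U = card {U #>\<^bsub>G\<^esub> v | v. v \<in> V}"

definition CO_dist :: "'a monoid \<Rightarrow> 'a set \<Rightarrow> 'a set \<Rightarrow> real" where
  "CO_dist G V W = ln (real (sg_index G V (V \<inter> W) * sg_index G W (W \<inter> V)))"

definition bounded_auts :: "'a monoid \<Rightarrow> 'a topology \<Rightarrow> ('a \<Rightarrow> 'a) set \<Rightarrow> bool" where
  "bounded_auts G T B \<longleftrightarrow> (\<exists>V \<in> CO_subgroups G T. \<exists>M::real.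
      \<forall>\<beta>1\<in>B. \<forall>\<beta>2\<in>B. CO_dist G (\<beta>1 ` V) (\<beta>2 ` V) \<le> M)"

definition conj_class :: "'a monoid \<Rightarrow> ('a \<Rightarrow> 'a) set \<Rightarrow> ('a \<Rightarrow> 'a) \<Rightarrow> ('a \<Rightarrow> 'a) set" where
  "conj_class G H \<phi> = {\<psi> \<otimes>\<^bsub>BijGroup (carrier G)\<^esub> \<phi> \<otimes>\<^bsub>BijGroup (carrier G)\<^esub>
                          inv\<^bsub>BijGroup (carrier G)\<^esub> \<psi> | \<psi>. \<psi> \<in> H}"

definition FC_d :: "'a monoid \<Rightarrow> 'a topology \<Rightarrow> ('a \<Rightarrow> 'a) set \<Rightarrow> ('a \<Rightarrow> 'a) set" where
  "FC_d G T H = {\<phi> \<in> H. bounded_auts G T (conj_class G H \<phi>)}"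

end

theory Submission
  imports Defs
begin

context group begin

lemma rcos_eq_iff:
  assumes "subgroup H G" "x \<in> carrier G" "y \<in> carrier G"
  shows "H #> x = H #> y \<longleftrightarrow> x \<otimes> inv y \<in> H"
proof
  assume "H #> x = H #> y"
  then have "x \<in> H #> y" using rcos_self[OF assms(2,1)] by simp
  then show "x \<otimes> inv y \<in> H" using subgroup.rcos_module_imp[OF assms(1) is_group assms(3)] by blast
next
  assume "x \<otimes> inv y \<in> H"
  then have "x \<in> H #> y" using subgroup.rcos_module_rev[OF assms(1) is_group assms(3,2)] by blast
  then show "H #> x = H #> y" using repr_independence[OF _ assms(3,1)] by simp
qed

lemma coset_map_card:
  assumes H1: "subgroup H1 G" and H2: "subgroup H2 G" and XY: "S1 \<subseteq> S2" "S2 \<subseteq> carrier G"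
    and fin: "finite {H1 #> y | y. y \<in> S2}"
    and comp: "\<And>x y. x \<in> S1 \<Longrightarrow> y \<in> S1 \<Longrightarrow> x \<otimes> inv y \<in> H1 \<Longrightarrow> x \<otimes> inv y \<in> H2"
  shows "finite {H2 #> x | x. x \<in> S1} \<and> card {H2 #> x | x. x \<in> S1} \<le> card {H1 #> y | y. y \<in> S2}"
proof -
  define g where "g c = H2 #> (SOME x. x \<in> S1 \<and> H1 #> x = c)" for c
  have sub: "{H2 #> x | x. x \<in> S1} \<subseteq> g ` {H1 #> y | y. y \<in> S2}"
  proof
    fix C assume "C \<in> {H2 #> x | x. x \<in> S1}"
    then obtain x where x: "x \<in> S1" "C = H2 #> x" by blast
    define x' where "x' = (SOME z. z \<in> S1 \<and> H1 #> z = H1 #> x)"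
    have x': "x' \<in> S1 \<and> H1 #> x' = H1 #> x" unfolding x'_def by (rule someI[of _ x]) (use x in auto)
    have xc: "x \<in> carrier G" "x' \<in> carrier G" using x x' XY by auto
    then have "x \<otimes> inv x' \<in> H1" using rcos_eq_iff[OF H1, of x x'] x' by auto
    then have "x \<otimes> inv x' \<in> H2" using comp x x' by blast
    then have "H2 #> x = H2 #> x'" using rcos_eq_iff[OF H2, of x x'] xc by auto
    then have "C = g (H1 #> x)" using x unfolding g_def x'_def by simp
    moreover have "H1 #> x \<in> {H1 #> y | y. y \<in> S2}" using x XY by blast
    ultimately show "C \<in> g ` {H1 #> y | y. y \<in> S2}" by blast
  qed
  have "finite (g ` {H1 #> y | y. y \<in> S2})" using fin by simp
  moreover have "card (g ` {H1 #> y | y. y \<in> S2}) \<le> card {H1 #> y | y. y \<in> S2}"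
    using card_image_le[OF fin] by blast
  ultimately show ?thesis using finite_subset[OF sub] card_mono[OF _ sub] by (meson le_trans)
qed

lemma coset_tower_card:
  assumes K: "subgroup K G" and L: "subgroup L G" and A: "subgroup A G" and KL: "K \<subseteq> L" and LA: "L \<subseteq> A"
    and f1: "finite {L #> a | a. a \<in> A}" and f2: "finite {K #> l | l. l \<in> L}"
  shows "finite {K #> a | a. a \<in> A} \<and>
         card {K #> a | a. a \<in> A} \<le> card {L #> a | a. a \<in> A} * card {K #> l | l. l \<in> L}"
proof -
  let ?CA = "{L #> a | a. a \<in> A}" and ?CL = "{K #> l | l. l \<in> L}"
  define rA where "rA c = (SOME a. a \<in> A \<and> L #> a = c)" for c
  define rL where "rL c = (SOME l. l \<in> L \<and> K #> l = c)" for c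
  define f where "f p = K #> (rL (snd p) \<otimes> rA (fst p))" for p
  have Ac: "A \<subseteq> carrier G" using A subgroup.subset by blast
  have sub: "{K #> a | a. a \<in> A} \<subseteq> f ` (?CA \<times> ?CL)"
  proof
    fix C assume "C \<in> {K #> a | a. a \<in> A}"
    then obtain a where a: "a \<in> A" "C = K #> a" by blast
    define r where "r = rA (L #> a)"
    have r: "r \<in> A \<and> L #> r = L #> a" unfolding r_def rA_def by (rule someI[of _ a]) (use a in auto)
    have ac: "a \<in> carrier G" "r \<in> carrier G" using a r Ac by auto
    have la: "a \<otimes> inv r \<in> L" using rcos_eq_iff[OF L ac] r by auto
    define l where "l = a \<otimes> inv r"
    define s where "s = rL (K #> l)"
    have s: "s \<in> L \<and> K #> s = K #> l" unfolding s_def rL_def by (rule someI[of _ l]) (use la l_def in auto)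
    have lc: "l \<in> carrier G" "s \<in> carrier G" using la s L subgroup.subset l_def by blast+
    have ks: "l \<otimes> inv s \<in> K" using rcos_eq_iff[OF K lc] s by auto
    have "a \<otimes> inv (s \<otimes> r) = l \<otimes> inv s"
      using ac lc by (simp add: l_def inv_mult_group m_assoc)
    then have "K #> a = K #> (s \<otimes> r)" using rcos_eq_iff[OF K, of a "s \<otimes> r"] ac lc ks by auto
    moreover have "f (L #> a, K #> l) = K #> (s \<otimes> r)" unfolding f_def s_def r_def by simp
    moreover have "(L #> a, K #> l) \<in> ?CA \<times> ?CL" using a la l_def by blast
    ultimately show "C \<in> f ` (?CA \<times> ?CL)" using a by force
  qed
  have fin: "finite (?CA \<times> ?CL)" using f1 f2 by simp
  have "card (f ` (?CA \<times> ?CL)) \<le> card ?CA * card ?CL"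
    using card_image_le[OF fin, of f] by (simp add: card_cartesian_product)
  then show ?thesis using finite_subset[OF sub] card_mono[OF _ sub] fin by (meson finite_imageI le_trans)
qed

lemma index_triangle:
  assumes A: "subgroup A G" and B: "subgroup B G" and C: "subgroup C G"
    and fAB: "finite {(A \<inter> B) #> a | a. a \<in> A}" and fBC: "finite {(B \<inter> C) #> b | b. b \<in> B}"
  shows "finite {(A \<inter> C) #> a | a. a \<in> A} \<and>
    card {(A \<inter> C) #> a | a. a \<in> A} \<le> card {(A \<inter> B) #> a | a. a \<in> A} * card {(B \<inter> C) #> b | b. b \<in> B}"
proof -
  have AB: "subgroup (A \<inter> B) G" and BC: "subgroup (B \<inter> C) G" and AC: "subgroup (A \<inter> C) G"
    and ABC: "subgroup (A \<inter> B \<inter> C) G"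
    using A B C subgroup_Int by blast+
  have Bc: "B \<subseteq> carrier G" using B subgroup.subset by blast
  have Ac: "A \<subseteq> carrier G" using A subgroup.subset by blast
  have m1: "finite {(A \<inter> B \<inter> C) #> x | x. x \<in> A \<inter> B} \<and>
      card {(A \<inter> B \<inter> C) #> x | x. x \<in> A \<inter> B} \<le> card {(B \<inter> C) #> b | b. b \<in> B}"
  proof (rule coset_map_card[OF BC ABC _ Bc fBC])
    show "A \<inter> B \<subseteq> B" by blast
    fix x y assume "x \<in> A \<inter> B" "y \<in> A \<inter> B" "x \<otimes> inv y \<in> B \<inter> C"
    moreover have "x \<otimes> inv y \<in> A" using calculation A by (simp add: subgroup.m_closed subgroup.m_inv_closed)
    ultimately show "x \<otimes> inv y \<in> A \<inter> B \<inter> C" by blast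
  qed
  have m2: "finite {(A \<inter> B \<inter> C) #> a | a. a \<in> A} \<and>
      card {(A \<inter> B \<inter> C) #> a | a. a \<in> A} \<le> card {(A \<inter> B) #> a | a. a \<in> A} * card {(A \<inter> B \<inter> C) #> x | x. x \<in> A \<inter> B}"
    by (rule coset_tower_card[OF ABC AB A _ _ fAB]) (use m1 in auto)
  have m3: "finite {(A \<inter> C) #> a | a. a \<in> A} \<and>
      card {(A \<inter> C) #> a | a. a \<in> A} \<le> card {(A \<inter> B \<inter> C) #> a | a. a \<in> A}"
    by (rule coset_map_card[OF ABC AC _ Ac]) (use m2 in auto)
  show ?thesis using m1 m2 m3 by (meson le_trans mult_le_mono2)
qed

end


context group begin
lemma mem_rcos_iff:
  assumes "V \<subseteq> carrier G" "g \<in> carrier G"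
  shows "x \<in> V #> g \<longleftrightarrow> x \<in> carrier G \<and> x \<otimes> inv g \<in> V"
proof
  assume "x \<in> V #> g"
  then obtain h where h: "h \<in> V" "x = h \<otimes> g" unfolding r_coset_def by blast
  then show "x \<in> carrier G \<and> x \<otimes> inv g \<in> V" using assms by (auto simp: m_assoc)
next
  assume "x \<in> carrier G \<and> x \<otimes> inv g \<in> V"
  then have "(x \<otimes> inv g) \<otimes> g = x" "x \<otimes> inv g \<in> V" using assms by (auto simp: m_assoc)
  then show "x \<in> V #> g" unfolding r_coset_def by (metis UN_iff singletonI)
qed

lemma mem_lcos_iff:
  assumes "V \<subseteq> carrier G" "g \<in> carrier G"
  shows "x \<in> g <# V \<longleftrightarrow> x \<in> carrier G \<and> inv g \<otimes> x \<in> V"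
proof
  assume "x \<in> g <# V"
  then obtain h where h: "h \<in> V" "x = g \<otimes> h" unfolding l_coset_def by blast
  then show "x \<in> carrier G \<and> inv g \<otimes> x \<in> V" using assms by (auto simp: m_assoc[symmetric])
next
  assume "x \<in> carrier G \<and> inv g \<otimes> x \<in> V"
  then have "g \<otimes> (inv g \<otimes> x) = x" "inv g \<otimes> x \<in> V" using assms by (auto simp: m_assoc[symmetric])
  then show "x \<in> g <# V" unfolding l_coset_def by (metis UN_iff singletonI)
qed
end

lemma tg_group: "topological_group G T \<Longrightarrow> group G"
  by (simp add: topological_group_def)

lemma tg_top: "topological_group G T \<Longrightarrow> topspace T = carrier G"
  by (simp add: topological_group_def)

lemma tg_mult: "topological_group G T \<Longrightarrow> continuous_map (prod_topology T T) T (\<lambda>p. fst p \<otimes>\<^bsub>G\<^esub> snd p)"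
  by (simp add: topological_group_def)

lemma tg_inv: "topological_group G T \<Longrightarrow> continuous_map T T (\<lambda>x. inv\<^bsub>G\<^esub> x)"
  by (simp add: topological_group_def)

lemma tg_lmult_cont:
  assumes tg: "topological_group G T" and g: "g \<in> carrier G"
  shows "continuous_map T T (\<lambda>x. g \<otimes>\<^bsub>G\<^esub> x)"
proof -
  have "continuous_map T (prod_topology T T) (\<lambda>x. (g, x))"
    by (intro continuous_map_pairedI) (use tg g tg_top in auto)
  from continuous_map_compose[OF this tg_mult[OF tg]] show ?thesis by (simp add: o_def)
qed

lemma tg_rmult_cont:
  assumes tg: "topological_group G T" and g: "g \<in> carrier G"
  shows "continuous_map T T (\<lambda>x. x \<otimes>\<^bsub>G\<^esub> g)"
proof -
  have "continuous_map T (prod_topology T T) (\<lambda>x. (x, g))"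
    by (intro continuous_map_pairedI) (use tg g tg_top in auto)
  from continuous_map_compose[OF this tg_mult[OF tg]] show ?thesis by (simp add: o_def)
qed

lemma tg_open_rcoset:
  fixes G :: "'a monoid" (structure)
  assumes tg: "topological_group G T" and V: "openin T V" and g: "g \<in> carrier G"
  shows "openin T (V #>\<^bsub>G\<^esub> g)"
proof -
  interpret group G using tg_group[OF tg] .
  have Vc: "V \<subseteq> carrier G" using openin_subset[OF V] tg_top[OF tg] by simp
  have "V #> g = {x \<in> topspace T. x \<otimes> inv g \<in> V}"
    using mem_rcos_iff[OF Vc g] tg_top[OF tg] by auto
  then show ?thesis using openin_continuous_map_preimage[OF tg_rmult_cont[OF tg inv_closed[OF g]] V] by simp
qed

lemma tg_open_lcoset:
  fixes G :: "'a monoid" (structure)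
  assumes tg: "topological_group G T" and V: "openin T V" and g: "g \<in> carrier G"
  shows "openin T (g <#\<^bsub>G\<^esub> V)"
proof -
  interpret group G using tg_group[OF tg] .
  have Vc: "V \<subseteq> carrier G" using openin_subset[OF V] tg_top[OF tg] by simp
  have "g <# V = {x \<in> topspace T. inv g \<otimes> x \<in> V}"
    using mem_lcos_iff[OF Vc g] tg_top[OF tg] by auto
  then show ?thesis using openin_continuous_map_preimage[OF tg_lmult_cont[OF tg inv_closed[OF g]] V] by simp
qed

lemma tg_component_sing:
  assumes tg: "topological_group G T" and td: "totally_disconnected_space T" and x: "x \<in> topspace T"
  shows "connected_component_of_set T x = {x}"
proof -
  have "connectedin T (connected_component_of_set T x)" by (rule connectedin_connected_component_of)
  moreover have "x \<in> connected_component_of_set T x" using x by (simp add: connected_component_of_refl)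
  ultimately show ?thesis using td unfolding totally_disconnected_space_def by blast
qed

lemma tg_Hausdorff:
  fixes G :: "'a monoid" (structure)
  assumes tg: "topological_group G T" and td: "totally_disconnected_space T"
  shows "Hausdorff_space T"
proof -
  interpret group G using tg_group[OF tg] .
  have one: "\<one> \<in> topspace T" using tg_top[OF tg] by simp
  have cl1: "closedin T {\<one>}" using closedin_connected_component_of[of T \<one>] tg_component_sing[OF tg td one] by simp
  have "continuous_map (prod_topology T T) (prod_topology T T) (\<lambda>p. (fst p, inv (snd p)))"
    by (intro continuous_map_pairedI continuous_map_fst continuous_map_compose[OF continuous_map_snd tg_inv[OF tg], unfolded o_def])
  from continuous_map_compose[OF this tg_mult[OF tg]]
  have D: "continuous_map (prod_topology T T) T (\<lambda>p. fst p \<otimes> inv (snd p))" by (simp add: o_def)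
  have eqv: "\<And>a b. a \<in> carrier G \<Longrightarrow> b \<in> carrier G \<Longrightarrow> a \<otimes> inv b = \<one> \<longleftrightarrow> a = b"
    by (metis inv_closed inv_equality inv_inv r_inv)
  have "(\<lambda>x. (x,x)) ` topspace T = {p \<in> topspace (prod_topology T T). fst p \<otimes> inv (snd p) \<in> {\<one>}}"
    using tg_top[OF tg] eqv by (auto simp: image_iff)
  then show ?thesis
    using closedin_continuous_map_preimage[OF D cl1] by (simp add: Hausdorff_space_closedin_diagonal)
qed


lemma van_Dantzig:
  fixes G :: "'a monoid" (structure)
  assumes tg: "topological_group G T" and td: "totally_disconnected_space T"
    and lc: "locally_compact_space T"
  shows "\<exists>S. S \<in> CO_subgroups G T"
proof -
  interpret group G using tg_group[OF tg] .
  have top: "topspace T = carrier G" using tg_top[OF tg] .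
  have haus: "Hausdorff_space T" using tg_Hausdorff[OF tg td] .
  have one: "\<one> \<in> topspace T" using top by simp
  obtain U0 K where U0: "openin T U0" "compactin T K" "\<one> \<in> U0" "U0 \<subseteq> K"
    using lc one unfolding locally_compact_space_def by blast
  have comp: "{\<one>} \<in> connected_components_of T"
    unfolding connected_components_of_def using tg_component_sing[OF tg td one] one by force
  obtain U V' where UV: "openin T U" "openin T V'" "disjnt U V'" "U \<union> V' = topspace T" "{\<one>} \<subseteq> U" "U \<subseteq> U0"
    using wilder_locally_compact_component_thm[OF lc haus comp _ U0(1)] one U0(3) by auto
  have Ucl: "closedin T U"
  proof -
    have "topspace T - U = V'" using UV(3,4) by (auto simp: disjnt_def)
    then show ?thesis using UV(2,4) unfolding closedin_def by auto
  qed
  have Ucp: "compactin T U" using closed_compactin[OF U0(2) _ Ucl] UV(6) U0(4) by blast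
  have Uc: "U \<subseteq> carrier G" using UV(4) top by blast
  define W where "W = {p \<in> topspace (prod_topology T T). fst p \<otimes> snd p \<in> U}"
  have Wo: "openin (prod_topology T T) W"
    unfolding W_def using openin_continuous_map_preimage[OF tg_mult[OF tg] UV(1)] by simp
  have "U \<times> {\<one>} \<subseteq> W" unfolding W_def using Uc top by auto
  then obtain U1 N where N: "openin T U1" "openin T N" "U \<subseteq> U1" "\<one> \<in> N" "U1 \<times> N \<subseteq> W"
    using tube_lemma_left[OF Wo Ucp one] by blast
  define V where "V = N \<inter> {x \<in> topspace T. inv x \<in> N}"
  have Vo: "openin T V" unfolding V_def
    using openin_Int[OF N(2) openin_continuous_map_preimage[OF tg_inv[OF tg] N(2)]] .
  have Vc: "V \<subseteq> carrier G" unfolding V_def using top by auto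
  have Vinv: "\<And>x. x \<in> V \<Longrightarrow> inv x \<in> V" unfolding V_def using top by auto
  have UV1: "u \<otimes> v \<in> U" if "u \<in> U" "v \<in> V" for u v
  proof -
    have "(u, v) \<in> U1 \<times> N" using that N(3) unfolding V_def by auto
    then show ?thesis using N(5) unfolding W_def by auto
  qed
  define S where "S = generate G V"
  have Ssub: "subgroup S G" unfolding S_def using generate_is_subgroup[OF Vc] .
  have Sc: "S \<subseteq> carrier G" unfolding S_def using generate_incl[OF Vc] .
  have SU': "\<forall>u\<in>U. u \<otimes> x \<in> U" if "x \<in> S" for x
    using that unfolding S_def
  proof (induction x rule: generate.induct)
    case one
    then show ?case using Uc by auto
  next
    case (incl h)
    then show ?case using UV1 by blast
  next
    case (inv h)
    then show ?case using UV1 Vinv by blast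
  next
    case (eng h1 h2)
    have "h1 \<in> carrier G" "h2 \<in> carrier G" using eng.hyps generate_incl[OF Vc] by auto
    then show ?case using eng.IH Uc by (auto simp: m_assoc[symmetric])
  qed
  have SU: "S \<subseteq> U"
  proof
    fix x assume "x \<in> S"
    then have "\<one> \<otimes> x \<in> U" using SU' UV(5) by blast
    then show "x \<in> U" using Sc \<open>x \<in> S\<close> by auto
  qed
  have VS: "\<And>g v. g \<in> S \<Longrightarrow> v \<in> V \<Longrightarrow> g \<otimes> v \<in> S"
    unfolding S_def by (simp add: generate.eng generate.incl)
  have gV: "g \<in> g <# V" if "g \<in> carrier G" for g
    using that mem_lcos_iff[OF Vc that, of g] N(4) Vinv unfolding V_def top
    by (metis (no_types, lifting) Int_iff Vc inv_one l_inv mem_Collect_eq one_closed r_one one top)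
  have So: "openin T S"
  proof (subst openin_subopen, intro ballI)
    fix g assume g: "g \<in> S"
    have gc: "g \<in> carrier G" using g Sc by blast
    have "g <# V \<subseteq> S" using VS g unfolding l_coset_def by blast
    then show "\<exists>T'. openin T T' \<and> g \<in> T' \<and> T' \<subseteq> S"
      using tg_open_lcoset[OF tg Vo gc] gV[OF gc] by blast
  qed
  have Scl: "closedin T S"
  proof -
    have "openin T (topspace T - S)"
    proof (subst openin_subopen, intro ballI)
      fix g assume g: "g \<in> topspace T - S"
      have gc: "g \<in> carrier G" using g top by blast
      have "g <# V \<subseteq> topspace T - S"
      proof
        fix y assume y: "y \<in> g <# V"
        then obtain v where v: "v \<in> V" "y = g \<otimes> v" unfolding l_coset_def by blast
        have vc: "v \<in> carrier G" using v Vc by blast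
        have "y \<notin> S"
        proof
          assume "y \<in> S"
          then have "y \<otimes> inv v \<in> S" using VS Vinv v by blast
          moreover have "y \<otimes> inv v = g" using v gc vc by (simp add: m_assoc)
          ultimately show False using g by blast
        qed
        then show "y \<in> topspace T - S" using v gc vc top by auto
      qed
      then show "\<exists>T'. openin T T' \<and> g \<in> T' \<and> T' \<subseteq> topspace T - S"
        using tg_open_lcoset[OF tg Vo gc] gV[OF gc] by blast
    qed
    then show ?thesis unfolding closedin_def using Sc top by auto
  qed
  have "compactin T S" using closed_compactin[OF Ucp SU Scl] .
  then show ?thesis using Ssub So unfolding CO_subgroups_def by blast
qed


lemma CO_sub: "V \<in> CO_subgroups G T \<Longrightarrow> subgroup V G"
  and CO_open: "V \<in> CO_subgroups G T \<Longrightarrow> openin T V"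
  and CO_compact: "V \<in> CO_subgroups G T \<Longrightarrow> compactin T V"
  by (auto simp: CO_subgroups_def)

lemma CO_index_finite:
  fixes G :: "'a monoid" (structure)
  assumes tg: "topological_group G T" and A: "A \<in> CO_subgroups G T" and B: "B \<in> CO_subgroups G T"
  shows "finite {(A \<inter> B) #> a | a. a \<in> A}"
proof -
  interpret group G using tg_group[OF tg] .
  let ?K = "A \<inter> B"
  have K: "subgroup ?K G" using subgroup_Int[OF CO_sub[OF A] CO_sub[OF B]] .
  have Ko: "openin T ?K" using openin_Int[OF CO_open[OF A] CO_open[OF B]] .
  have Ac: "A \<subseteq> carrier G" using CO_sub[OF A] subgroup.subset by blast
  let ?U = "{?K #> a | a. a \<in> A}"
  have "\<forall>Xs\<in>?U. openin T Xs" using tg_open_rcoset[OF tg Ko] Ac by blast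
  moreover have "A \<subseteq> \<Union>?U" using rcos_self[OF _ K] Ac by blast
  ultimately obtain F where F: "finite F" "F \<subseteq> ?U" "A \<subseteq> \<Union>F"
    using CO_compact[OF A] unfolding compactin_def by meson
  have "?U \<subseteq> F"
  proof
    fix Xs assume "Xs \<in> ?U"
    then obtain a where a: "a \<in> A" "Xs = ?K #> a" by blast
    then obtain Y where Y: "Y \<in> F" "a \<in> Y" using F(3) by blast
    then obtain a' where a': "a' \<in> A" "Y = ?K #> a'" using F(2) by blast
    have "?K #> a' = ?K #> a" using repr_independence[of a ?K a'] Y a' K Ac by auto
    then show "Xs \<in> F" using a Y a' by simp
  qed
  then show ?thesis using F(1) finite_subset by blast
qed

lemma sg_index_pos:
  fixes G :: "'a monoid" (structure)
  assumes "group G" "subgroup A G" "finite {K #> a | a. a \<in> A}"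
  shows "0 < sg_index G A K"
proof -
  have "\<one> \<in> A" using assms(2) subgroup.one_closed by blast
  then have "{K #> a | a. a \<in> A} \<noteq> {}" by blast
  then show ?thesis using assms(3) unfolding sg_index_def by (simp add: card_gt_0_iff)
qed

lemma CO_index_triangle:
  fixes G :: "'a monoid" (structure)
  assumes tg: "topological_group G T" and A: "A \<in> CO_subgroups G T" and B: "B \<in> CO_subgroups G T"
    and C: "C \<in> CO_subgroups G T"
  shows "sg_index G A (A \<inter> C) \<le> sg_index G A (A \<inter> B) * sg_index G B (B \<inter> C)"
  using group.index_triangle[OF tg_group[OF tg] CO_sub[OF A] CO_sub[OF B] CO_sub[OF C]
      CO_index_finite[OF tg A B] CO_index_finite[OF tg B C]]
  unfolding sg_index_def by simp

lemma CO_dist_triangle: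
  fixes G :: "'a monoid" (structure)
  assumes tg: "topological_group G T" and A: "A \<in> CO_subgroups G T" and B: "B \<in> CO_subgroups G T"
    and C: "C \<in> CO_subgroups G T"
  shows "CO_dist G A C \<le> CO_dist G A B + CO_dist G B C"
proof -
  have grp: "group G" using tg_group[OF tg] .
  define a1 where "a1 = sg_index G A (A \<inter> B)"
  define a2 where "a2 = sg_index G B (B \<inter> A)"
  define b1 where "b1 = sg_index G B (B \<inter> C)"
  define b2 where "b2 = sg_index G C (C \<inter> B)"
  define c1 where "c1 = sg_index G A (A \<inter> C)"
  define c2 where "c2 = sg_index G C (C \<inter> A)"
  have p: "0 < a1" "0 < a2" "0 < b1" "0 < b2" "0 < c1" "0 < c2"
    unfolding a1_def a2_def b1_def b2_def c1_def c2_def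
    by (rule sg_index_pos[OF grp CO_sub CO_index_finite[OF tg]]; fact)+
  have "c1 \<le> a1 * b1" unfolding a1_def b1_def c1_def by (rule CO_index_triangle[OF tg A B C])
  moreover have "c2 \<le> b2 * a2" unfolding a2_def b2_def c2_def by (rule CO_index_triangle[OF tg C B A])
  ultimately have "c1 * c2 \<le> (a1 * a2) * (b1 * b2)"
    by (metis mult.assoc mult.commute mult_le_mono)
  then have le: "real (c1 * c2) \<le> real (a1 * a2) * real (b1 * b2)" by (metis of_nat_le_iff of_nat_mult)
  have "CO_dist G A C = ln (real (c1 * c2))" unfolding CO_dist_def c1_def c2_def by simp
  also have "\<dots> \<le> ln (real (a1 * a2) * real (b1 * b2))"
    using le p by (subst ln_le_cancel_iff) auto
  also have "\<dots> = ln (real (a1 * a2)) + ln (real (b1 * b2))"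
    using p by (subst ln_mult) auto
  also have "\<dots> = CO_dist G A B + CO_dist G B C" unfolding CO_dist_def a1_def a2_def b1_def b2_def by simp
  finally show ?thesis .
qed

lemma CO_dist_sym: "CO_dist G A B = CO_dist G B A"
  by (simp add: CO_dist_def mult.commute)

lemma CO_dist_self:
  fixes G :: "'a monoid" (structure)
  assumes "group G" "subgroup A G"
  shows "CO_dist G A A = 0"
proof -
  have "{A #> a | a. a \<in> A} = {A}"
    using group.coset_join2[OF assms(1) _ assms(2)] assms(2) subgroup.subset subgroup.one_closed by blast
  then show ?thesis unfolding CO_dist_def sg_index_def by simp
qed

lemma auto_coset_image:
  fixes G :: "'a monoid" (structure)
  assumes "\<beta> \<in> hom G G" "K \<subseteq> carrier G" "x \<in> carrier G"
  shows "\<beta> ` (K #> x) = (\<beta> ` K) #> \<beta> x"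
proof -
  have m: "\<And>h. h \<in> K \<Longrightarrow> \<beta> (h \<otimes> x) = \<beta> h \<otimes> \<beta> x" using assms hom_mult by (metis subsetD)
  show ?thesis unfolding r_coset_def
  proof (rule equalityI; rule subsetI)
    fix y assume "y \<in> \<beta> ` (\<Union>h\<in>K. {h \<otimes> x})"
    then obtain h where "h \<in> K" "y = \<beta> (h \<otimes> x)" by blast
    then show "y \<in> (\<Union>h\<in>\<beta> ` K. {h \<otimes> \<beta> x})" using m by blast
  next
    fix y assume "y \<in> (\<Union>h\<in>\<beta> ` K. {h \<otimes> \<beta> x})"
    then obtain h where "h \<in> K" "y = \<beta> h \<otimes> \<beta> x" by blast
    then show "y \<in> \<beta> ` (\<Union>h\<in>K. {h \<otimes> x})" using m[of h, symmetric] by blast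
  qed
qed

lemma auto_index:
  fixes G :: "'a monoid" (structure)
  assumes grp: "group G" and b: "\<beta> \<in> auto G" and A: "A \<subseteq> carrier G" and B: "B \<subseteq> carrier G"
  shows "sg_index G (\<beta> ` A) (\<beta> ` A \<inter> \<beta> ` B) = sg_index G A (A \<inter> B)"
proof -
  have hom: "\<beta> \<in> hom G G" and inj: "inj_on \<beta> (carrier G)"
    using b unfolding auto_def Bij_def bij_betw_def by auto
  have i: "\<beta> ` A \<inter> \<beta> ` B = \<beta> ` (A \<inter> B)" using inj_on_image_Int[OF inj A B] by simp
  let ?S = "{(A \<inter> B) #> x | x. x \<in> A}"
  have eq: "{(\<beta> ` (A \<inter> B)) #> y | y. y \<in> \<beta> ` A} = (image \<beta>) ` ?S"
    using auto_coset_image[OF hom, of "A \<inter> B"] A by blast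
  have "\<Union>?S \<subseteq> carrier G" using A unfolding r_coset_def by (auto intro: monoid.m_closed[OF group.is_monoid[OF grp]])
  then have "inj_on (image \<beta>) ?S" using inj_on_image inj_on_subset[OF inj] by blast
  then show ?thesis unfolding sg_index_def i eq by (simp add: card_image)
qed

lemma auto_dist:
  fixes G :: "'a monoid" (structure)
  assumes grp: "group G" and b: "\<beta> \<in> auto G" and A: "A \<subseteq> carrier G" and B: "B \<subseteq> carrier G"
  shows "CO_dist G (\<beta> ` A) (\<beta> ` B) = CO_dist G A B"
  unfolding CO_dist_def using auto_index[OF grp b A B] auto_index[OF grp b B A] by simp

lemma top_auto_CO:
  fixes G :: "'a monoid" (structure)
  assumes tg: "topological_group G T" and b: "\<beta> \<in> top_auto G T" and V: "V \<in> CO_subgroups G T"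
  shows "\<beta> ` V \<in> CO_subgroups G T"
proof -
  have grp: "group G" using tg_group[OF tg] .
  have hom: "\<beta> \<in> hom G G" and hm: "homeomorphic_map T T \<beta>"
    using b unfolding top_auto_def auto_def by auto
  have "group_hom G G \<beta>" using grp hom by (simp add: group_hom_def group_hom_axioms_def)
  then have "subgroup (\<beta> ` V) G" using group_hom.subgroup_img_is_subgroup CO_sub[OF V] by blast
  moreover have "compactin T (\<beta> ` V)"
    using image_compactin[OF CO_compact[OF V] homeomorphic_imp_continuous_map[OF hm]] .
  moreover have "openin T (\<beta> ` V)"
    using homeomorphic_imp_open_map[OF hm] CO_open[OF V] unfolding open_map_def by blast
  ultimately show ?thesis unfolding CO_subgroups_def by blast
qed


lemma bij_mult_image:
  assumes "\<beta> \<in> Bij S" "\<gamma> \<in> Bij S" "V \<subseteq> S"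
  shows "(\<beta> \<otimes>\<^bsub>BijGroup S\<^esub> \<gamma>) ` V = \<beta> ` \<gamma> ` V"
  using assms by (force simp: BijGroup_def compose_def)

lemma bij_one_image:
  assumes "V \<subseteq> S"
  shows "\<one>\<^bsub>BijGroup S\<^esub> ` V = V"
  using assms by (force simp: BijGroup_def)

lemma bounded_mono: "B' \<subseteq> B \<Longrightarrow> bounded_auts G T B \<Longrightarrow> bounded_auts G T B'"
  unfolding bounded_auts_def by blast

lemma top_auto_auto: "\<beta> \<in> top_auto G T \<Longrightarrow> \<beta> \<in> auto G"
  by (simp add: top_auto_def)

lemma CO_carrier: "topological_group G T \<Longrightarrow> V \<in> CO_subgroups G T \<Longrightarrow> V \<subseteq> carrier G"
  using CO_sub subgroup.subset by blast

lemma bounded_any: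
  assumes tg: "topological_group G T" and B: "B \<subseteq> top_auto G T" and bd: "bounded_auts G T B"
    and W: "W \<in> CO_subgroups G T"
  shows "\<exists>M. \<forall>\<beta>1\<in>B. \<forall>\<beta>2\<in>B. CO_dist G (\<beta>1 ` W) (\<beta>2 ` W) \<le> M"
proof -
  have grp: "group G" using tg_group[OF tg] .
  obtain V M0 where V: "V \<in> CO_subgroups G T" and M0: "\<forall>\<beta>1\<in>B. \<forall>\<beta>2\<in>B. CO_dist G (\<beta>1 ` V) (\<beta>2 ` V) \<le> M0"
    using bd unfolding bounded_auts_def by blast
  have "CO_dist G (\<beta>1 ` W) (\<beta>2 ` W) \<le> CO_dist G W V + M0 + CO_dist G V W" if b: "\<beta>1 \<in> B" "\<beta>2 \<in> B" for \<beta>1 \<beta>2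
  proof -
    have co: "\<beta>1 ` W \<in> CO_subgroups G T" "\<beta>1 ` V \<in> CO_subgroups G T" "\<beta>2 ` V \<in> CO_subgroups G T" "\<beta>2 ` W \<in> CO_subgroups G T"
      using top_auto_CO[OF tg _ W] top_auto_CO[OF tg _ V] b B by blast+
    have t1: "CO_dist G (\<beta>1 ` W) (\<beta>2 ` W) \<le> CO_dist G (\<beta>1 ` W) (\<beta>1 ` V) + CO_dist G (\<beta>1 ` V) (\<beta>2 ` W)"
      by (rule CO_dist_triangle[OF tg co(1,2,4)])
    have t2: "CO_dist G (\<beta>1 ` V) (\<beta>2 ` W) \<le> CO_dist G (\<beta>1 ` V) (\<beta>2 ` V) + CO_dist G (\<beta>2 ` V) (\<beta>2 ` W)"
      by (rule CO_dist_triangle[OF tg co(2,3,4)])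
    have e1: "CO_dist G (\<beta>1 ` W) (\<beta>1 ` V) = CO_dist G W V"
      using auto_dist[OF grp top_auto_auto CO_carrier[OF tg W] CO_carrier[OF tg V]] b B by blast
    have e2: "CO_dist G (\<beta>2 ` V) (\<beta>2 ` W) = CO_dist G V W"
      using auto_dist[OF grp top_auto_auto CO_carrier[OF tg V] CO_carrier[OF tg W]] b B by blast
    have "CO_dist G (\<beta>1 ` V) (\<beta>2 ` V) \<le> M0" using M0 b by blast
    then show ?thesis using t1 t2 e1 e2 by linarith
  qed
  then show ?thesis by blast
qed

lemma bounded_prod:
  assumes tg: "topological_group G T" and B1: "B1 \<subseteq> top_auto G T" "B1 \<subseteq> Bij (carrier G)"
    and B2: "B2 \<subseteq> top_auto G T" "B2 \<subseteq> Bij (carrier G)"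
    and bd1: "bounded_auts G T B1" and bd2: "bounded_auts G T B2"
  shows "bounded_auts G T {\<beta> \<otimes>\<^bsub>BijGroup (carrier G)\<^esub> \<gamma> | \<beta> \<gamma>. \<beta> \<in> B1 \<and> \<gamma> \<in> B2}"
proof -
  have grp: "group G" using tg_group[OF tg] .
  obtain V M2 where V: "V \<in> CO_subgroups G T" and M2: "\<forall>\<beta>1\<in>B2. \<forall>\<beta>2\<in>B2. CO_dist G (\<beta>1 ` V) (\<beta>2 ` V) \<le> M2"
    using bd2 unfolding bounded_auts_def by blast
  show ?thesis
  proof (cases "B2 = {}")
    case True
    then show ?thesis using V unfolding bounded_auts_def by blast
  next
    case False
    then obtain \<gamma>0 where g0: "\<gamma>0 \<in> B2" by blast
    define W where "W = \<gamma>0 ` V"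
    have W: "W \<in> CO_subgroups G T" unfolding W_def using top_auto_CO[OF tg _ V] g0 B2 by blast
    obtain M1 where M1: "\<forall>\<beta>1\<in>B1. \<forall>\<beta>2\<in>B1. CO_dist G (\<beta>1 ` W) (\<beta>2 ` W) \<le> M1"
      using bounded_any[OF tg B1(1) bd1 W] by blast
    have Vc: "V \<subseteq> carrier G" using CO_carrier[OF tg V] .
    have key: "CO_dist G ((\<beta> \<otimes>\<^bsub>BijGroup (carrier G)\<^esub> \<gamma>) ` V) ((\<beta>' \<otimes>\<^bsub>BijGroup (carrier G)\<^esub> \<gamma>') ` V) \<le> M2 + M1 + M2"
      if b: "\<beta> \<in> B1" "\<beta>' \<in> B1" "\<gamma> \<in> B2" "\<gamma>' \<in> B2" for \<beta> \<beta>' \<gamma> \<gamma>'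
    proof -
      have i1: "(\<beta> \<otimes>\<^bsub>BijGroup (carrier G)\<^esub> \<gamma>) ` V = \<beta> ` \<gamma> ` V"
        using bij_mult_image[OF _ _ Vc] b B1 B2 by blast
      have i2: "(\<beta>' \<otimes>\<^bsub>BijGroup (carrier G)\<^esub> \<gamma>') ` V = \<beta>' ` \<gamma>' ` V"
        using bij_mult_image[OF _ _ Vc] b B1 B2 by blast
      have gV: "\<gamma> ` V \<in> CO_subgroups G T" "\<gamma>' ` V \<in> CO_subgroups G T"
        using top_auto_CO[OF tg _ V] b B2 by blast+
      have co: "\<beta> ` \<gamma> ` V \<in> CO_subgroups G T" "\<beta> ` W \<in> CO_subgroups G T"
               "\<beta>' ` W \<in> CO_subgroups G T" "\<beta>' ` \<gamma>' ` V \<in> CO_subgroups G T"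
        using top_auto_CO[OF tg _ gV(1)] top_auto_CO[OF tg _ gV(2)] top_auto_CO[OF tg _ W] b B1 by blast+
      have "CO_dist G (\<beta> ` \<gamma> ` V) (\<beta>' ` \<gamma>' ` V) \<le> CO_dist G (\<beta> ` \<gamma> ` V) (\<beta> ` W) + CO_dist G (\<beta> ` W) (\<beta>' ` \<gamma>' ` V)"
        by (rule CO_dist_triangle[OF tg co(1,2,4)])
      also have "CO_dist G (\<beta> ` W) (\<beta>' ` \<gamma>' ` V) \<le> CO_dist G (\<beta> ` W) (\<beta>' ` W) + CO_dist G (\<beta>' ` W) (\<beta>' ` \<gamma>' ` V)"
        by (rule CO_dist_triangle[OF tg co(2,3,4)])
      also have "CO_dist G (\<beta> ` \<gamma> ` V) (\<beta> ` W) = CO_dist G (\<gamma> ` V) W"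
        using auto_dist[OF grp top_auto_auto CO_carrier[OF tg gV(1)] CO_carrier[OF tg W]] b B1 by blast
      also have "CO_dist G (\<beta>' ` W) (\<beta>' ` \<gamma>' ` V) = CO_dist G W (\<gamma>' ` V)"
        using auto_dist[OF grp top_auto_auto CO_carrier[OF tg W] CO_carrier[OF tg gV(2)]] b B1 by blast
      finally have "CO_dist G (\<beta> ` \<gamma> ` V) (\<beta>' ` \<gamma>' ` V) \<le> CO_dist G (\<gamma> ` V) W + CO_dist G (\<beta> ` W) (\<beta>' ` W) + CO_dist G W (\<gamma>' ` V)"
        by linarith
      moreover have "CO_dist G (\<gamma> ` V) W \<le> M2" "CO_dist G W (\<gamma>' ` V) \<le> M2"
        using M2 b g0 unfolding W_def by blast+
      moreover have "CO_dist G (\<beta> ` W) (\<beta>' ` W) \<le> M1" using M1 b by blast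
      ultimately have "CO_dist G (\<beta> ` \<gamma> ` V) (\<beta>' ` \<gamma>' ` V) \<le> M2 + M1 + M2" by linarith
      then show ?thesis unfolding i1 i2 .
    qed
    show ?thesis unfolding bounded_auts_def
      by (rule bexI[OF _ V], rule exI[of _ "M2 + M1 + M2"]) (use key in blast)
  qed
qed

lemma bounded_inv:
  assumes tg: "topological_group G T" and Hs: "subgroup H (BijGroup (carrier G))"
    and Ht: "H \<subseteq> top_auto G T" and BH: "B \<subseteq> H" and bd: "bounded_auts G T B"
  shows "bounded_auts G T (m_inv (BijGroup (carrier G)) ` B)"
proof -
  let ?BG = "BijGroup (carrier G)"
  interpret BG: group ?BG by (rule group_BijGroup)
  have grp: "group G" using tg_group[OF tg] .
  have HB: "H \<subseteq> Bij (carrier G)" using Hs subgroup.subset by (fastforce simp: BijGroup_def)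
  obtain V M where V: "V \<in> CO_subgroups G T" and M: "\<forall>\<beta>1\<in>B. \<forall>\<beta>2\<in>B. CO_dist G (\<beta>1 ` V) (\<beta>2 ` V) \<le> M"
    using bd unfolding bounded_auts_def by blast
  have Vc: "V \<subseteq> carrier G" using CO_carrier[OF tg V] .
  show ?thesis
  proof (cases "B = {}")
    case True
    then show ?thesis using V unfolding bounded_auts_def by blast
  next
    case False
    then obtain \<phi>0 where p0: "\<phi>0 \<in> B" by blast
    have p0V: "\<phi>0 ` V \<in> CO_subgroups G T" using top_auto_CO[OF tg _ V] p0 BH Ht by blast
    define C where "C = CO_dist G V (\<phi>0 ` V)"
    have one: "CO_dist G ((inv\<^bsub>?BG\<^esub> \<beta>) ` V) V \<le> C + M" if b: "\<beta> \<in> B" for \<beta>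
    proof -
      have bH: "\<beta> \<in> H" using b BH by blast
      have iH: "inv\<^bsub>?BG\<^esub> \<beta> \<in> H" using subgroup.m_inv_closed[OF Hs bH] .
      have "\<beta> ` ((inv\<^bsub>?BG\<^esub> \<beta>) ` V) = (\<beta> \<otimes>\<^bsub>?BG\<^esub> inv\<^bsub>?BG\<^esub> \<beta>) ` V"
        using bij_mult_image[OF _ _ Vc] bH iH HB by blast
      also have "\<dots> = V" using BG.r_inv[of \<beta>] bij_one_image[OF Vc] bH Hs subgroup.mem_carrier by metis
      finally have e: "\<beta> ` ((inv\<^bsub>?BG\<^esub> \<beta>) ` V) = V" .
      have iVc: "(inv\<^bsub>?BG\<^esub> \<beta>) ` V \<subseteq> carrier G"
        using CO_carrier[OF tg top_auto_CO[OF tg _ V]] iH Ht by blast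
      have "CO_dist G ((inv\<^bsub>?BG\<^esub> \<beta>) ` V) V = CO_dist G (\<beta> ` ((inv\<^bsub>?BG\<^esub> \<beta>) ` V)) (\<beta> ` V)"
        using auto_dist[OF grp top_auto_auto iVc Vc] bH Ht by (metis subsetD)
      also have "\<dots> = CO_dist G V (\<beta> ` V)" using e by simp
      also have "\<dots> \<le> CO_dist G V (\<phi>0 ` V) + CO_dist G (\<phi>0 ` V) (\<beta> ` V)"
        using CO_dist_triangle[OF tg V p0V top_auto_CO[OF tg _ V]] bH Ht by blast
      also have "CO_dist G (\<phi>0 ` V) (\<beta> ` V) \<le> M" using M p0 b by blast
      finally show ?thesis unfolding C_def by linarith
    qed
    have "CO_dist G (\<iota>1 ` V) (\<iota>2 ` V) \<le> 2 * (C + M)"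
      if i: "\<iota>1 \<in> m_inv ?BG ` B" "\<iota>2 \<in> m_inv ?BG ` B" for \<iota>1 \<iota>2
    proof -
      obtain \<beta>1 \<beta>2 where b: "\<beta>1 \<in> B" "\<beta>2 \<in> B" "\<iota>1 = inv\<^bsub>?BG\<^esub> \<beta>1" "\<iota>2 = inv\<^bsub>?BG\<^esub> \<beta>2" using i by blast
      have iH: "\<iota>1 \<in> H" "\<iota>2 \<in> H" using subgroup.m_inv_closed[OF Hs] b BH by blast+
      have co: "\<iota>1 ` V \<in> CO_subgroups G T" "\<iota>2 ` V \<in> CO_subgroups G T"
        using top_auto_CO[OF tg _ V] iH Ht by blast+
      have "CO_dist G (\<iota>1 ` V) (\<iota>2 ` V) \<le> CO_dist G (\<iota>1 ` V) V + CO_dist G V (\<iota>2 ` V)"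
        by (rule CO_dist_triangle[OF tg co(1) V co(2)])
      also have "CO_dist G V (\<iota>2 ` V) = CO_dist G (\<iota>2 ` V) V" by (rule CO_dist_sym)
      finally show ?thesis using one[OF b(1)] one[OF b(2)] unfolding b(3,4)[symmetric] by (smt (verit))
    qed
    then show ?thesis unfolding bounded_auts_def using V by blast
  qed
qed


theorem proposition1:
  fixes G :: "'a monoid" and T :: "'a topology" and H :: "('a \<Rightarrow> 'a) set"
  assumes "topological_group G T"
    and "totally_disconnected_space T"
    and "locally_compact_space T"
    and "subgroup H (BijGroup (carrier G))"
    and "H \<subseteq> top_auto G T"
  shows "FC_d G T H \<lhd> (BijGroup (carrier G))\<lparr>carrier := H\<rparr> \<and>
         FC_d G T (FC_d G T H) = FC_d G T H"
proof -
  note tg = assms(1) and Hs = assms(4) and Ht = assms(5)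
  let ?BG = "BijGroup (carrier G)"
  interpret BG: group ?BG by (rule group_BijGroup)
  have grp: "group G" using tg_group[OF tg] .
  have Hc: "H \<subseteq> carrier ?BG" using Hs subgroup.subset by blast
  have HB: "H \<subseteq> Bij (carrier G)" using Hc by (simp add: BijGroup_def)
  define N where "N = FC_d G T H"
  have NH: "N \<subseteq> H" unfolding N_def FC_d_def by blast
  have cancel: "\<And>a z. a \<in> carrier ?BG \<Longrightarrow> z \<in> carrier ?BG \<Longrightarrow> inv\<^bsub>?BG\<^esub> a \<otimes>\<^bsub>?BG\<^esub> (a \<otimes>\<^bsub>?BG\<^esub> z) = z"
    by (simp add: BG.m_assoc[symmetric])
  have ccH: "conj_class G H \<phi> \<subseteq> H" if "\<phi> \<in> H" for \<phi>
    unfolding conj_class_def using that Hs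
    by (auto intro!: subgroup.m_closed[OF Hs] subgroup.m_inv_closed[OF Hs])
  have Ncc: "bounded_auts G T (conj_class G H \<phi>)" if "\<phi> \<in> N" for \<phi>
    using that unfolding N_def FC_d_def by blast
  have Nin: "\<phi> \<in> N" if "\<phi> \<in> H" "bounded_auts G T (conj_class G H \<phi>)" for \<phi>
    using that unfolding N_def FC_d_def by blast
  have oneN: "\<one>\<^bsub>?BG\<^esub> \<in> N"
  proof (rule Nin)
    show "\<one>\<^bsub>?BG\<^esub> \<in> H" using subgroup.one_closed[OF Hs] .
    have "conj_class G H \<one>\<^bsub>?BG\<^esub> \<subseteq> {\<one>\<^bsub>?BG\<^esub>}"
      unfolding conj_class_def using Hc by auto
    moreover have "bounded_auts G T {\<one>\<^bsub>?BG\<^esub>}"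
    proof -
      obtain V where V: "V \<in> CO_subgroups G T" using van_Dantzig[OF tg assms(2,3)] by blast
      have "CO_dist G (\<one>\<^bsub>?BG\<^esub> ` V) (\<one>\<^bsub>?BG\<^esub> ` V) = 0"
        using bij_one_image[OF CO_carrier[OF tg V]] CO_dist_self[OF grp CO_sub[OF V]] by simp
      then show ?thesis unfolding bounded_auts_def using V by force
    qed
    ultimately show "bounded_auts G T (conj_class G H \<one>\<^bsub>?BG\<^esub>)" by (rule bounded_mono)
  qed
  have multN: "\<phi> \<otimes>\<^bsub>?BG\<^esub> ch \<in> N" if p: "\<phi> \<in> N" "ch \<in> N" for \<phi> ch
  proof (rule Nin)
    have pH: "\<phi> \<in> H" "ch \<in> H" using p NH by blast+
    show "\<phi> \<otimes>\<^bsub>?BG\<^esub> ch \<in> H" using subgroup.m_closed[OF Hs pH] .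
    have "conj_class G H (\<phi> \<otimes>\<^bsub>?BG\<^esub> ch) \<subseteq>
      {\<beta> \<otimes>\<^bsub>?BG\<^esub> \<gamma> | \<beta> \<gamma>. \<beta> \<in> conj_class G H \<phi> \<and> \<gamma> \<in> conj_class G H ch}"
    proof
      fix x assume "x \<in> conj_class G H (\<phi> \<otimes>\<^bsub>?BG\<^esub> ch)"
      then obtain \<psi> where ps: "\<psi> \<in> H" "x = \<psi> \<otimes>\<^bsub>?BG\<^esub> (\<phi> \<otimes>\<^bsub>?BG\<^esub> ch) \<otimes>\<^bsub>?BG\<^esub> inv\<^bsub>?BG\<^esub> \<psi>"
        unfolding conj_class_def by blast
      have c: "\<psi> \<in> carrier ?BG" "\<phi> \<in> carrier ?BG" "ch \<in> carrier ?BG" using ps pH Hc by blast+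
      have "x = (\<psi> \<otimes>\<^bsub>?BG\<^esub> \<phi> \<otimes>\<^bsub>?BG\<^esub> inv\<^bsub>?BG\<^esub> \<psi>) \<otimes>\<^bsub>?BG\<^esub> (\<psi> \<otimes>\<^bsub>?BG\<^esub> ch \<otimes>\<^bsub>?BG\<^esub> inv\<^bsub>?BG\<^esub> \<psi>)"
        using ps c cancel by (simp add: BG.m_assoc)
      then show "x \<in> {\<beta> \<otimes>\<^bsub>?BG\<^esub> \<gamma> | \<beta> \<gamma>. \<beta> \<in> conj_class G H \<phi> \<and> \<gamma> \<in> conj_class G H ch}"
        unfolding conj_class_def using ps by blast
    qed
    moreover have "bounded_auts G T {\<beta> \<otimes>\<^bsub>?BG\<^esub> \<gamma> | \<beta> \<gamma>. \<beta> \<in> conj_class G H \<phi> \<and> \<gamma> \<in> conj_class G H ch}"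
      by (rule bounded_prod[OF tg _ _ _ _ Ncc[OF p(1)] Ncc[OF p(2)]])
         (use ccH pH Ht HB in blast)+
    ultimately show "bounded_auts G T (conj_class G H (\<phi> \<otimes>\<^bsub>?BG\<^esub> ch))" by (rule bounded_mono)
  qed
  have invN: "inv\<^bsub>?BG\<^esub> \<phi> \<in> N" if p: "\<phi> \<in> N" for \<phi>
  proof (rule Nin)
    have pH: "\<phi> \<in> H" using p NH by blast
    show "inv\<^bsub>?BG\<^esub> \<phi> \<in> H" using subgroup.m_inv_closed[OF Hs pH] .
    have "conj_class G H (inv\<^bsub>?BG\<^esub> \<phi>) \<subseteq> m_inv ?BG ` conj_class G H \<phi>"
    proof
      fix x assume "x \<in> conj_class G H (inv\<^bsub>?BG\<^esub> \<phi>)"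
      then obtain \<psi> where ps: "\<psi> \<in> H" "x = \<psi> \<otimes>\<^bsub>?BG\<^esub> inv\<^bsub>?BG\<^esub> \<phi> \<otimes>\<^bsub>?BG\<^esub> inv\<^bsub>?BG\<^esub> \<psi>"
        unfolding conj_class_def by blast
      have c: "\<psi> \<in> carrier ?BG" "\<phi> \<in> carrier ?BG" using ps pH Hc by blast+
      have "x = inv\<^bsub>?BG\<^esub> (\<psi> \<otimes>\<^bsub>?BG\<^esub> \<phi> \<otimes>\<^bsub>?BG\<^esub> inv\<^bsub>?BG\<^esub> \<psi>)"
        using ps c by (simp add: BG.inv_mult_group BG.m_assoc)
      then show "x \<in> m_inv ?BG ` conj_class G H \<phi>"
        unfolding conj_class_def using ps by blast
    qed
    moreover have "bounded_auts G T (m_inv ?BG ` conj_class G H \<phi>)"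
      by (rule bounded_inv[OF tg Hs Ht ccH[OF pH] Ncc[OF p]])
    ultimately show "bounded_auts G T (conj_class G H (inv\<^bsub>?BG\<^esub> \<phi>))" by (rule bounded_mono)
  qed
  have Nsub: "subgroup N ?BG"
    by (rule BG.subgroupI) (use NH Hc oneN multN invN in auto)
  have conjN: "x \<otimes>\<^bsub>?BG\<^esub> h \<otimes>\<^bsub>?BG\<^esub> inv\<^bsub>?BG\<^esub> x \<in> N" if xh: "x \<in> H" "h \<in> N" for x h
  proof (rule Nin)
    have hH: "h \<in> H" using xh NH by blast
    show "x \<otimes>\<^bsub>?BG\<^esub> h \<otimes>\<^bsub>?BG\<^esub> inv\<^bsub>?BG\<^esub> x \<in> H"
      using Hs xh hH by (intro subgroup.m_closed[OF Hs] subgroup.m_inv_closed[OF Hs]) auto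
    have "conj_class G H (x \<otimes>\<^bsub>?BG\<^esub> h \<otimes>\<^bsub>?BG\<^esub> inv\<^bsub>?BG\<^esub> x) \<subseteq> conj_class G H h"
    proof
      fix y assume "y \<in> conj_class G H (x \<otimes>\<^bsub>?BG\<^esub> h \<otimes>\<^bsub>?BG\<^esub> inv\<^bsub>?BG\<^esub> x)"
      then obtain \<psi> where ps: "\<psi> \<in> H"
        "y = \<psi> \<otimes>\<^bsub>?BG\<^esub> (x \<otimes>\<^bsub>?BG\<^esub> h \<otimes>\<^bsub>?BG\<^esub> inv\<^bsub>?BG\<^esub> x) \<otimes>\<^bsub>?BG\<^esub> inv\<^bsub>?BG\<^esub> \<psi>"
        unfolding conj_class_def by blast
      have c: "\<psi> \<in> carrier ?BG" "x \<in> carrier ?BG" "h \<in> carrier ?BG" using ps xh hH Hc by blast+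
      have "y = (\<psi> \<otimes>\<^bsub>?BG\<^esub> x) \<otimes>\<^bsub>?BG\<^esub> h \<otimes>\<^bsub>?BG\<^esub> inv\<^bsub>?BG\<^esub> (\<psi> \<otimes>\<^bsub>?BG\<^esub> x)"
        using ps c by (simp add: BG.inv_mult_group BG.m_assoc)
      moreover have "\<psi> \<otimes>\<^bsub>?BG\<^esub> x \<in> H" using subgroup.m_closed[OF Hs ps(1) xh(1)] .
      ultimately show "y \<in> conj_class G H h" unfolding conj_class_def by blast
    qed
    then show "bounded_auts G T (conj_class G H (x \<otimes>\<^bsub>?BG\<^esub> h \<otimes>\<^bsub>?BG\<^esub> inv\<^bsub>?BG\<^esub> x))"
      by (rule bounded_mono) (rule Ncc[OF xh(2)])
  qed
  have grpH: "group (?BG\<lparr>carrier := H\<rparr>)" using subgroup.subgroup_is_group[OF Hs BG.is_group] .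
  have norm: "N \<lhd> ?BG\<lparr>carrier := H\<rparr>"
  proof (subst group.normal_inv_iff[OF grpH], intro conjI ballI)
    show "subgroup N (?BG\<lparr>carrier := H\<rparr>)" using BG.subgroup_incl[OF Nsub Hs NH] .
    fix x h assume xh: "x \<in> carrier (?BG\<lparr>carrier := H\<rparr>)" "h \<in> N"
    then have "x \<in> H" by simp
    then show "x \<otimes>\<^bsub>?BG\<lparr>carrier := H\<rparr>\<^esub> h \<otimes>\<^bsub>?BG\<lparr>carrier := H\<rparr>\<^esub> inv\<^bsub>?BG\<lparr>carrier := H\<rparr>\<^esub> x \<in> N"
      using conjN[OF _ xh(2)] BG.m_inv_consistent[OF Hs] by simp
  qed
  have "FC_d G T N = N"
  proof
    show "FC_d G T N \<subseteq> N" unfolding FC_d_def by blast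
    show "N \<subseteq> FC_d G T N"
    proof
      fix \<phi> assume p: "\<phi> \<in> N"
      have "conj_class G N \<phi> \<subseteq> conj_class G H \<phi>" using NH unfolding conj_class_def by blast
      then have "bounded_auts G T (conj_class G N \<phi>)" using bounded_mono Ncc[OF p] by blast
      then show "\<phi> \<in> FC_d G T N" using p unfolding FC_d_def by blast
    qed
  qed
  then show ?thesis using norm unfolding N_def by simp
qed

end
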